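(* For every $T$, every sequence of forecasts $\mathbf p\in[0,1]^T$ and outcomes $\mathbf x\in\{0,1\}^T$, there exist a finite action set $\mathcal A$ and a bounded utility function $u:\mathcal A\times\{0,1\}\to[-1,1]$ such that $\mathrm{AgentSwapReg}_u(\mathbf p,\mathbf x)\ge\mathrm{Cal}_2(\mathbf p,\mathbf x)$.
   Context: For forecast $p$, an agent with action set $\mathcal A$ and utility $u$ plays $a(p)\in\arg\max_{a\in\mathcal A}\mathbb E_{x\sim\mathrm{Ber}(p)}[u(a,x)]$. The agent swap regret is $\mathrm{AgentSwapReg}_u(\mathbf p,\mathbf x)=\max_{\pi:\mathcal A\to\mathcal A}\sum_{t=1}^T u(\pi(a(p_t)),x_t)-\sum_{t=1}^T u(a(p_t),x_t)$. With $n_p=|\{t:p_t=p\}|$, $m_p=|\{t:p_t=p,\ x_t=1\}|$, the $L_2$-calibration error is $\mathrm{Cal}_2(\mathbf p,\mathbf x)=\sum_p n_p(p-m_p/n_p)^2$ (sum over $p$ with $n_p>0$). *)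

theory Defs
  imports Complex_Main
begin

text \<open>Actions are real numbers (any finite action set embeds into a finite set of reals).
  Outcomes are reals in {0,1}; the utility u a y is only relevant for y in {0,1}.\<close>

definition exp_util :: "(real \<Rightarrow> real \<Rightarrow> real) \<Rightarrow> real \<Rightarrow> real \<Rightarrow> real" where
  "exp_util u a q = (1 - q) * u a 0 + q * u a 1"

definition is_best_response ::
  "real set \<Rightarrow> (real \<Rightarrow> real \<Rightarrow> real) \<Rightarrow> real \<Rightarrow> real \<Rightarrow> bool" where
  "is_best_response A u q a \<longleftrightarrow> a \<in> A \<and> (\<forall>b\<in>A. exp_util u b q \<le> exp_util u a q)"

definition agent_swap_reg ::
  "real set \<Rightarrow> (real \<Rightarrow> real \<Rightarrow> real) \<Rightarrow> (real \<Rightarrow> real) \<Rightarrow> (nat \<Rightarrow> real) \<Rightarrow> (nat \<Rightarrow> real) \<Rightarrow> nat \<Rightarrow> real" where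
  "agent_swap_reg A u br p x T =
     Max {(\<Sum>t<T. u (\<pi> (br (p t))) (x t)) | \<pi>. \<forall>a\<in>A. \<pi> a \<in> A}
     - (\<Sum>t<T. u (br (p t)) (x t))"

definition cnt_n :: "(nat \<Rightarrow> real) \<Rightarrow> nat \<Rightarrow> real \<Rightarrow> nat" where
  "cnt_n p T q = card {t. t < T \<and> p t = q}"

definition cnt_m :: "(nat \<Rightarrow> real) \<Rightarrow> (nat \<Rightarrow> real) \<Rightarrow> nat \<Rightarrow> real \<Rightarrow> nat" where
  "cnt_m p x T q = card {t. t < T \<and> p t = q \<and> x t = 1}"

definition cal2 :: "(nat \<Rightarrow> real) \<Rightarrow> (nat \<Rightarrow> real) \<Rightarrow> nat \<Rightarrow> real" where
  "cal2 p x T = (\<Sum>q\<in>p ` {..<T}.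
      real (cnt_n p T q) * (q - real (cnt_m p x T q) / real (cnt_n p T q))^2)"

end

theory Submission
  imports Defs "HOL-Library.FuncSet"
begin

lemma eu_quad: "exp_util (\<lambda>a y. 1 - (a - y)^2) a q = 1 - (a - q)^2 - q * (1 - q)"
  by (simp add: exp_util_def power2_eq_square algebra_simps)

lemma group_identity:
  fixes T :: nat and p x :: "nat \<Rightarrow> real"
  assumes x01: "\<forall>t<T. x t = 0 \<or> x t = 1"
  defines "fr \<equiv> \<lambda>q. real (cnt_m p x T q) / real (cnt_n p T q)"
  shows "(\<Sum>t<T. (p t - x t)^2 - (fr (p t) - x t)^2) = cal2 p x T"
proof -
  let ?P = "p ` {..<T}"
  let ?h = "\<lambda>t. (p t - x t)^2 - (fr (p t) - x t)^2"
  have "(\<Sum>t<T. ?h t) = (\<Sum>q\<in>?P. \<Sum>t\<in>{t. t \<in> {..<T} \<and> p t = q}. ?h t)"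
    by (rule sum.image_gen) simp
  also have "\<dots> = (\<Sum>q\<in>?P. real (cnt_n p T q) * (q - fr q)^2)"
  proof (rule sum.cong[OF refl])
    fix q assume qP: "q \<in> ?P"
    define S where "S = {t. t < T \<and> p t = q}"
    have finS: "finite S" unfolding S_def by simp
    have Seq: "{t. t \<in> {..<T} \<and> p t = q} = S" unfolding S_def by auto
    have npos: "cnt_n p T q > 0" using qP finS unfolding cnt_n_def S_def[symmetric]
      by (auto simp: card_gt_0_iff S_def)
    have sx: "(\<Sum>t\<in>S. x t) = real (cnt_m p x T q)"
    proof -
      have "(\<Sum>t\<in>S. x t) = (\<Sum>t\<in>S. if x t = 1 then 1 else 0)"
        by (rule sum.cong) (use x01 in \<open>auto simp: S_def\<close>)
      also have "\<dots> = (\<Sum>t\<in>{t\<in>S. x t = 1}. (1::real))"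
        using sum.inter_filter[OF finS, of "\<lambda>_. (1::real)" "\<lambda>t. x t = 1"] by simp
      also have "\<dots> = real (card {t\<in>S. x t = 1})" by simp
      also have "{t\<in>S. x t = 1} = {t. t < T \<and> p t = q \<and> x t = 1}" by (auto simp: S_def)
      finally show ?thesis by (simp add: cnt_m_def)
    qed
    have nS: "card S = cnt_n p T q" by (simp add: cnt_n_def S_def)
    have "(\<Sum>t\<in>S. ?h t) = (\<Sum>t\<in>S. (q - fr q) * (q + fr q) - 2 * (q - fr q) * x t)"
      by (rule sum.cong) (auto simp: S_def power2_eq_square algebra_simps)
    also have "\<dots> = real (card S) * (q - fr q) * (q + fr q) - 2 * (q - fr q) * (\<Sum>t\<in>S. x t)"
      by (simp add: sum_subtractf sum_distrib_left)
    also have "\<dots> = real (cnt_n p T q) * (q - fr q)^2"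
      using npos unfolding nS sx fr_def by (simp add: power2_eq_square field_simps)
    finally show "(\<Sum>t\<in>{t. t \<in> {..<T} \<and> p t = q}. ?h t) = real (cnt_n p T q) * (q - fr q)^2"
      using Seq by simp
  qed
  also have "\<dots> = cal2 p x T" by (simp add: cal2_def fr_def)
  finally show ?thesis .
qed

theorem theorem4p12:
  fixes T :: nat and p x :: "nat \<Rightarrow> real"
  assumes "\<forall>t<T. 0 \<le> p t \<and> p t \<le> 1"
    and "\<forall>t<T. x t = 0 \<or> x t = 1"
  shows "\<exists>(A :: real set) (u :: real \<Rightarrow> real \<Rightarrow> real).
           finite A \<and> A \<noteq> {} \<and>
           (\<forall>a\<in>A. \<bar>u a 0\<bar> \<le> 1 \<and> \<bar>u a 1\<bar> \<le> 1) \<and>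
           (\<forall>br. (\<forall>q. 0 \<le> q \<and> q \<le> 1 \<longrightarrow> is_best_response A u q (br q)) \<longrightarrow>
                 agent_swap_reg A u br p x T \<ge> cal2 p x T)"
proof -
  define fr where "fr = (\<lambda>q. real (cnt_m p x T q) / real (cnt_n p T q))"
  define P where "P = p ` {..<T}"
  define A where "A = insert 0 (P \<union> fr ` P)"
  define u :: "real \<Rightarrow> real \<Rightarrow> real" where "u = (\<lambda>a y. 1 - (a - y)^2)"
  have finA: "finite A" by (simp add: A_def P_def)
  have frb: "0 \<le> fr q \<and> fr q \<le> 1" for q
  proof -
    have "cnt_m p x T q \<le> cnt_n p T q" unfolding cnt_m_def cnt_n_def
      by (rule card_mono) auto
    then show ?thesis unfolding fr_def
      by (cases "cnt_n p T q = 0") (auto simp: divide_le_eq_1)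
  qed
  have A01: "0 \<le> a \<and> a \<le> 1" if "a \<in> A" for a
    using that assms(1) frb by (auto simp: A_def P_def)
  have ubound: "\<forall>a\<in>A. \<bar>u a 0\<bar> \<le> 1 \<and> \<bar>u a 1\<bar> \<le> 1"
  proof
    fix a assume "a \<in> A"
    then have "0 \<le> a" "a \<le> 1" using A01 by auto
    then have "a^2 \<le> 1" "(a-1)^2 \<le> 1" proof -
      have "(1-a)*(1-a) \<le> 1" using \<open>0 \<le> a\<close> \<open>a \<le> 1\<close> by (intro mult_le_one) auto
      moreover have "a*a \<le> 1" using \<open>0 \<le> a\<close> \<open>a \<le> 1\<close> by (intro mult_le_one) auto
      ultimately show "a^2 \<le> 1" "(a-1)^2 \<le> 1" by (auto simp: power2_eq_square algebra_simps)
    qed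
    then show "\<bar>u a 0\<bar> \<le> 1 \<and> \<bar>u a 1\<bar> \<le> 1" by (auto simp: u_def)
  qed
  have main: "agent_swap_reg A u br p x T \<ge> cal2 p x T"
    if br: "\<forall>q. 0 \<le> q \<and> q \<le> 1 \<longrightarrow> is_best_response A u q (br q)" for br
  proof -
    have brp: "br (p t) = p t" if t: "t < T" for t
    proof -
      have "is_best_response A u (p t) (br (p t))" using br assms(1) t by auto
      moreover have "p t \<in> A" using t by (auto simp: A_def P_def)
      ultimately have "exp_util u (p t) (p t) \<le> exp_util u (br (p t)) (p t)"
        unfolding is_best_response_def by auto
      then have "(br (p t) - p t)^2 \<le> 0" by (simp add: u_def eu_quad)
      then show ?thesis by simp
    qed
    define \<pi> where "\<pi> = (\<lambda>a. if a \<in> P then fr a else a)"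
    have piA: "\<forall>a\<in>A. \<pi> a \<in> A" by (auto simp: \<pi>_def A_def)
    let ?S = "{(\<Sum>t<T. u (\<pi>' (br (p t))) (x t)) | \<pi>'. \<forall>a\<in>A. \<pi>' a \<in> A}"
    have "?S \<subseteq> (\<lambda>g. \<Sum>t<T. u (g t) (x t)) ` (PiE {..<T} (\<lambda>_. A))"
    proof
      fix s assume "s \<in> ?S"
      then obtain \<pi>' where s: "s = (\<Sum>t<T. u (\<pi>' (br (p t))) (x t))" and h: "\<forall>a\<in>A. \<pi>' a \<in> A"
        by blast
      let ?g = "restrict (\<lambda>t. \<pi>' (br (p t))) {..<T}"
      have "?g \<in> PiE {..<T} (\<lambda>_. A)"
        using h br assms(1) brp by (auto simp: is_best_response_def)
      moreover have "s = (\<Sum>t<T. u (?g t) (x t))" using s by simp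
      ultimately show "s \<in> (\<lambda>g. \<Sum>t<T. u (g t) (x t)) ` (PiE {..<T} (\<lambda>_. A))" by blast
    qed
    then have finS: "finite ?S" by (rule finite_subset) (simp add: finite_PiE finA)
    have memS: "(\<Sum>t<T. u (\<pi> (br (p t))) (x t)) \<in> ?S" using piA by blast
    have "(\<Sum>t<T. u (\<pi> (br (p t))) (x t)) \<le> Max ?S" using finS memS by (rule Max_ge)
    then have "agent_swap_reg A u br p x T \<ge>
        (\<Sum>t<T. u (\<pi> (br (p t))) (x t)) - (\<Sum>t<T. u (br (p t)) (x t))"
      unfolding agent_swap_reg_def by linarith
    also have "(\<Sum>t<T. u (\<pi> (br (p t))) (x t)) - (\<Sum>t<T. u (br (p t)) (x t))
        = (\<Sum>t<T. (p t - x t)^2 - (fr (p t) - x t)^2)"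
      unfolding sum_subtractf[symmetric]
      by (rule sum.cong) (auto simp: brp \<pi>_def P_def u_def)
    also have "\<dots> = cal2 p x T"
      using group_identity[OF assms(2)] unfolding fr_def by simp
    finally show ?thesis .
  qed
  show ?thesis
    by (rule exI[of _ A], rule exI[of _ u]) (use finA ubound main in \<open>auto simp: A_def\<close>)
qed

end
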